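(* Let $T\in\mathbb{N}$. Assume there exists a measurable function $K:\mathbb{Y}\times\mathbb{R}^{n_\epsilon}\to\mathbb{Y}$ such that $H(x,e)=K(h(x),e)$ for all $x\in\mathbb{X}$, $e\in\mathbb{R}^{n_\epsilon}$, and that for all probability measures $\nu,\nu'$ on $\mathbb{Y}^{T+1}$ with $\nu\neq\nu'$ there exists a Borel set $A\subset\mathbb{Y}^{T+1}$ with $$\int_{\mathbb{Y}^{T+1}}\mathbb{P}[K(\hat\gamma,\epsilon)\in A]\,d\nu(\hat\gamma)\neq\int_{\mathbb{Y}^{T+1}}\mathbb{P}[K(\hat\gamma,\epsilon)\in A]\,d\nu'(\hat\gamma),$$ where $\epsilon=(\epsilon_0,\dots,\epsilon_T)$ and $K$ is applied element-wise, $K(\hat\gamma,\epsilon)=(K(\hat\gamma_0,\epsilon_0),\dots,K(\hat\gamma_T,\epsilon_T))$. Assume moreover that there is no process noise, i.e., $\eta_t=0$ almost surely for all $t$. Then for all $x_a,x_b\in\mathbb{X}$, $x_a$ and $x_b$ are distinguishable in time $T$ for the deterministic system if and only if they are distributionally distinguishable in time $T$ for the stochastic system.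
   Context: Let $\mathbb{X}\subset\mathbb{R}^{n_x}$ and $\mathbb{Y}\subset\mathbb{R}^{n_y}$ be open sets with their Borel $\sigma$-algebras; random variables live on a probability space $(\Omega,\mathcal{A},\mathbb{P})$. The deterministic system is $x_{t+1}=f(x_t)$, $y_t=h(x_t)$ with $f:\mathbb{X}\to\mathbb{X}$, $h:\mathbb{X}\to\mathbb{Y}$; $\phi(t,x_0)$ is its state at time $t$ from $x_0$ and $\gamma(T,x_0)=(h(\phi(0,x_0)),\dots,h(\phi(T,x_0)))\in\mathbb{Y}^{T+1}$. Two states $x_a,x_b$ are distinguishable in time $T$ for the deterministic system if $\gamma(T,x_a)\neq\gamma(T,x_b)$. The stochastic system is $X_{t+1}=F(X_t,\eta_t)$, $Y_t=H(X_t,\epsilon_t)$ with random $\eta_t\in\mathbb{R}^{n_\eta}$, $\epsilon_t\in\mathbb{R}^{n_\epsilon}$, $F(x,0)=f(x)$, $H(x,0)=h(x)$, $X_0\sim\mu$ for a probability measure $\mu$ on $\mathbb{X}$, and $\eta_t,\epsilon_t$ independent of $(X_s)_{s\le t}$. $\Phi(t,\mu)$ is the random state at time $t$ from $X_0\sim\mu$; $\Gamma(T,\mu)=(H(\Phi(0,\mu),\epsilon_0),\dots,H(\Phi(T,\mu),\epsilon_T))$ with law $\mathbb{P}^T_\mu$. Initial distributions $\mu_a,\mu_b$ are distributionally distinguishable in time $T$ if $\mathbb{P}^T_{\mu_a}\neq\mathbb{P}^T_{\mu_b}$; for states $x$, one uses the Dirac measure $\delta_x$ as initial distribution. *)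

theory Defs
  imports "HOL-Probability.Probability"
begin

definition phi :: "('x \<Rightarrow> 'x) \<Rightarrow> nat \<Rightarrow> 'x \<Rightarrow> 'x" where
  "phi f t x0 = (f ^^ t) x0"

text \<open>Output trajectory (h(phi 0 x0), ..., h(phi T x0)), as an element of Y^{T+1}
  indexed by {..T}.\<close>
definition gamma :: "('x \<Rightarrow> 'x) \<Rightarrow> ('x \<Rightarrow> 'y) \<Rightarrow> nat \<Rightarrow> 'x \<Rightarrow> (nat \<Rightarrow> 'y)" where
  "gamma f h T x0 = (\<lambda>t\<in>{..T}. h (phi f t x0))"

definition det_distinguishable ::
  "('x \<Rightarrow> 'x) \<Rightarrow> ('x \<Rightarrow> 'y) \<Rightarrow> nat \<Rightarrow> 'x \<Rightarrow> 'x \<Rightarrow> bool" where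
  "det_distinguishable f h T xa xb \<longleftrightarrow> gamma f h T xa \<noteq> gamma f h T xb"

primrec Phi :: "('x \<Rightarrow> 'n \<Rightarrow> 'x) \<Rightarrow> (nat \<Rightarrow> 'w \<Rightarrow> 'n) \<Rightarrow> ('w \<Rightarrow> 'x) \<Rightarrow> nat \<Rightarrow> 'w \<Rightarrow> 'x" where
  "Phi F eta X0 0 \<omega> = X0 \<omega>"
| "Phi F eta X0 (Suc t) \<omega> = F (Phi F eta X0 t \<omega>) (eta t \<omega>)"

definition Gamma :: "('x \<Rightarrow> 'n \<Rightarrow> 'x) \<Rightarrow> ('x \<Rightarrow> 'e \<Rightarrow> 'y) \<Rightarrow> (nat \<Rightarrow> 'w \<Rightarrow> 'n) \<Rightarrow> (nat \<Rightarrow> 'w \<Rightarrow> 'e)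
    \<Rightarrow> ('w \<Rightarrow> 'x) \<Rightarrow> nat \<Rightarrow> 'w \<Rightarrow> (nat \<Rightarrow> 'y)" where
  "Gamma F H eta eps X0 T \<omega> = (\<lambda>t\<in>{..T}. H (Phi F eta X0 t \<omega>) (eps t \<omega>))"

text \<open>Measurable space Y^{T+1} (Y with its Borel sigma-algebra, i.e. the trace of the Borel sets).\<close>
definition Yspace :: "'y::topological_space set \<Rightarrow> nat \<Rightarrow> (nat \<Rightarrow> 'y) measure" where
  "Yspace Ys T = (\<Pi>\<^sub>M t\<in>{..T}. restrict_space borel Ys)"

text \<open>Law P^T_mu of Gamma(T, mu) where X0 is a random variable with law mu.\<close>
definition law_Gamma :: "'w measure \<Rightarrow> 'y::topological_space set \<Rightarrow> ('x \<Rightarrow> 'n \<Rightarrow> 'x) \<Rightarrow> ('x \<Rightarrow> 'e \<Rightarrow> 'y)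
    \<Rightarrow> (nat \<Rightarrow> 'w \<Rightarrow> 'n) \<Rightarrow> (nat \<Rightarrow> 'w \<Rightarrow> 'e) \<Rightarrow> ('w \<Rightarrow> 'x) \<Rightarrow> nat \<Rightarrow> (nat \<Rightarrow> 'y) measure" where
  "law_Gamma M Ys F H eta eps X0 T = distr M (Yspace Ys T) (Gamma F H eta eps X0 T)"

text \<open>Distributional distinguishability of two states x_a, x_b: the initial distributions
  are the Dirac measures, i.e. X0 is the constant random variable.\<close>
definition dist_distinguishable :: "'w measure \<Rightarrow> 'y::topological_space set \<Rightarrow> ('x \<Rightarrow> 'n \<Rightarrow> 'x)
    \<Rightarrow> ('x \<Rightarrow> 'e \<Rightarrow> 'y) \<Rightarrow> (nat \<Rightarrow> 'w \<Rightarrow> 'n) \<Rightarrow> (nat \<Rightarrow> 'w \<Rightarrow> 'e) \<Rightarrow> nat \<Rightarrow> 'x \<Rightarrow> 'x \<Rightarrow> bool" where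
  "dist_distinguishable M Ys F H eta eps T xa xb \<longleftrightarrow>
     law_Gamma M Ys F H eta eps (\<lambda>_. xa) T \<noteq> law_Gamma M Ys F H eta eps (\<lambda>_. xb) T"

end

theory Submission
  imports Defs
begin

theorem corollary1:
  fixes Xs :: "'x::euclidean_space set" and Ys :: "'y::euclidean_space set"
    and f :: "'x \<Rightarrow> 'x" and h :: "'x \<Rightarrow> 'y"
    and F :: "'x \<Rightarrow> 'n::euclidean_space \<Rightarrow> 'x" and H :: "'x \<Rightarrow> 'e::euclidean_space \<Rightarrow> 'y"
    and K :: "'y \<Rightarrow> 'e \<Rightarrow> 'y"
    and M :: "'w measure" and eta :: "nat \<Rightarrow> 'w \<Rightarrow> 'n" and eps :: "nat \<Rightarrow> 'w \<Rightarrow> 'e"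
    and T :: nat
  assumes "open Xs" and "open Ys"
    and "prob_space M"
    and f_maps: "f \<in> Xs \<rightarrow> Xs" and h_maps: "h \<in> Xs \<rightarrow> Ys"
    and F_meas: "(\<lambda>(x, n). F x n) \<in> measurable (restrict_space borel Xs \<Otimes>\<^sub>M borel) (restrict_space borel Xs)"
    and H_meas: "(\<lambda>(x, e). H x e) \<in> measurable (restrict_space borel Xs \<Otimes>\<^sub>M borel) (restrict_space borel Ys)"
    and F0: "\<And>x. x \<in> Xs \<Longrightarrow> F x 0 = f x"
    and H0: "\<And>x. x \<in> Xs \<Longrightarrow> H x 0 = h x"
    and eta_rv: "\<And>t. eta t \<in> borel_measurable M"
    and eps_rv: "\<And>t. eps t \<in> borel_measurable M"
    and K_meas: "(\<lambda>(y, e). K y e) \<in> measurable (restrict_space borel Ys \<Otimes>\<^sub>M borel) (restrict_space borel Ys)"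
    and HK: "\<And>x e. x \<in> Xs \<Longrightarrow> H x e = K (h x) e"
    and K_sep: "\<And>\<nu> \<nu>'. prob_space \<nu> \<Longrightarrow> sets \<nu> = sets (Yspace Ys T) \<Longrightarrow>
                   prob_space \<nu>' \<Longrightarrow> sets \<nu>' = sets (Yspace Ys T) \<Longrightarrow> \<nu> \<noteq> \<nu>' \<Longrightarrow>
                   \<exists>A \<in> sets (Yspace Ys T).
                     (\<integral>g. measure M {\<omega> \<in> space M. (\<lambda>t\<in>{..T}. K (g t) (eps t \<omega>)) \<in> A} \<partial>\<nu>)
                     \<noteq> (\<integral>g. measure M {\<omega> \<in> space M. (\<lambda>t\<in>{..T}. K (g t) (eps t \<omega>)) \<in> A} \<partial>\<nu>')"
    and no_process_noise: "\<And>t. AE \<omega> in M. eta t \<omega> = 0"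
  shows "\<forall>xa \<in> Xs. \<forall>xb \<in> Xs.
           det_distinguishable f h T xa xb \<longleftrightarrow> dist_distinguishable M Ys F H eta eps T xa xb"
proof (intro ballI)
  fix xa xb assume xa: "xa \<in> Xs" and xb: "xb \<in> Xs"
  interpret P: prob_space M by fact
  define Y where "Y = Yspace Ys T"
  have spY: "space Y = (\<Pi>\<^sub>E t\<in>{..T}. Ys)"
    unfolding Y_def Yspace_def space_PiM by (simp add: space_restrict_space)
  have phiX: "phi f t x \<in> Xs" if "x \<in> Xs" for t x
    using that f_maps by (induction t) (auto simp: phi_def)
  define G where "G x = (\<lambda>\<omega>. (\<lambda>t\<in>{..T}. K (gamma f h T x t) (eps t \<omega>)))" for x
  have gY: "gamma f h T x \<in> space Y" if "x \<in> Xs" for x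
    using phiX[OF that] h_maps unfolding spY gamma_def by auto
  have Gmeas: "G x \<in> measurable M Y" if "x \<in> Xs" for x
    unfolding G_def Y_def Yspace_def
  proof (rule measurable_restrict)
    fix t assume t: "t \<in> {..T}"
    have c: "gamma f h T x t \<in> space (restrict_space borel Ys)"
      using gY[OF that] t unfolding spY by (auto simp: space_restrict_space)
    have "(\<lambda>\<omega>. (gamma f h T x t, eps t \<omega>)) \<in> measurable M (restrict_space borel Ys \<Otimes>\<^sub>M borel)"
      using c eps_rv by (intro measurable_Pair) auto
    from measurable_comp[OF this K_meas]
    show "(\<lambda>\<omega>. K (gamma f h T x t) (eps t \<omega>)) \<in> measurable M (restrict_space borel Ys)"
      by (simp add: o_def)
  qed
  have Phimeas: "Phi F eta (\<lambda>_. x) t \<in> measurable M (restrict_space borel Xs)" if "x \<in> Xs" for x t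
  proof (induction t)
    case 0 then show ?case using that by (simp add: space_restrict_space)
  next
    case (Suc t)
    have "(\<lambda>\<omega>. (Phi F eta (\<lambda>_. x) t \<omega>, eta t \<omega>)) \<in> measurable M (restrict_space borel Xs \<Otimes>\<^sub>M borel)"
      using Suc eta_rv by (intro measurable_Pair) auto
    from measurable_comp[OF this F_meas] show ?case by (simp add: o_def)
  qed
  have Gammameas: "Gamma F H eta eps (\<lambda>_. x) T \<in> measurable M Y" if "x \<in> Xs" for x
    unfolding Gamma_def Y_def Yspace_def
  proof (rule measurable_restrict)
    fix t assume t: "t \<in> {..T}"
    have "(\<lambda>\<omega>. (Phi F eta (\<lambda>_. x) t \<omega>, eps t \<omega>)) \<in> measurable M (restrict_space borel Xs \<Otimes>\<^sub>M borel)"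
      using Phimeas[OF that] eps_rv by (intro measurable_Pair) auto
    from measurable_comp[OF this H_meas]
    show "(\<lambda>\<omega>. H (Phi F eta (\<lambda>_. x) t \<omega>) (eps t \<omega>)) \<in> measurable M (restrict_space borel Ys)"
      by (simp add: o_def)
  qed
  have AEeta: "AE \<omega> in M. \<forall>t. eta t \<omega> = 0"
    using no_process_noise by (simp add: AE_all_countable)
  have law: "law_Gamma M Ys F H eta eps (\<lambda>_. x) T = distr M Y (G x)" if "x \<in> Xs" for x
    unfolding law_Gamma_def Y_def[symmetric]
  proof (rule distr_cong_AE)
    show "AE \<omega> in M. Gamma F H eta eps (\<lambda>_. x) T \<omega> = G x \<omega>"
      using AEeta
    proof eventually_elim
      case (elim \<omega>)
      have ph: "Phi F eta (\<lambda>_. x) t \<omega> = phi f t x" for t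
        by (induction t) (auto simp: phi_def elim F0 phiX[OF that, unfolded phi_def])
      show ?case unfolding Gamma_def G_def gamma_def
        by (auto simp: ph HK phiX[OF that])
    qed
  qed (auto intro: Gammameas Gmeas that)
  show "det_distinguishable f h T xa xb \<longleftrightarrow> dist_distinguishable M Ys F H eta eps T xa xb"
  proof
    assume "dist_distinguishable M Ys F H eta eps T xa xb"
    then show "det_distinguishable f h T xa xb"
      unfolding dist_distinguishable_def det_distinguishable_def law[OF xa] law[OF xb]
      by (auto simp: G_def)
  next
    assume d: "det_distinguishable f h T xa xb"
    define ga where "ga = gamma f h T xa"
    define gb where "gb = gamma f h T xb"
    have gaY: "ga \<in> space Y" and gbY: "gb \<in> space Y" using gY xa xb ga_def gb_def by auto
    have ne: "ga \<noteq> gb" using d unfolding det_distinguishable_def ga_def gb_def .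
    have "\<exists>t. t \<le> T \<and> ga t \<noteq> gb t"
    proof (rule ccontr)
      assume "\<not> (\<exists>t. t \<le> T \<and> ga t \<noteq> gb t)"
      then have "ga = gb" unfolding ga_def gb_def gamma_def by (intro ext) (auto simp: restrict_def)
      then show False using ne by simp
    qed
    then obtain t where t: "t \<le> T" "ga t \<noteq> gb t" by blast
    define S where "S = (\<lambda>g. g t) -` {ga t} \<inter> space Y"
    have "(\<lambda>g. g t) \<in> measurable Y (restrict_space borel Ys)"
      unfolding Y_def Yspace_def using t by (intro measurable_component_singleton) auto
    moreover have "{ga t} \<in> sets (restrict_space borel Ys)"
    proof -
      have "ga t \<in> Ys" using gaY t unfolding spY by auto
      moreover have "Ys \<in> sets borel" using \<open>open Ys\<close> by auto
      ultimately show ?thesis by (subst sets_restrict_space_iff) auto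
    qed
    ultimately have S: "S \<in> sets Y" unfolding S_def by (rule measurable_sets)
    have rne: "return Y ga \<noteq> return Y gb"
    proof
      assume "return Y ga = return Y gb"
      then have "emeasure (return Y ga) S = emeasure (return Y gb) S" by simp
      then show False using S gaY gbY t unfolding S_def by (auto simp: indicator_def)
    qed
    obtain A where A: "A \<in> sets Y" and
      Ane: "(\<integral>g. measure M {\<omega> \<in> space M. (\<lambda>t\<in>{..T}. K (g t) (eps t \<omega>)) \<in> A} \<partial>return Y ga)
         \<noteq> (\<integral>g. measure M {\<omega> \<in> space M. (\<lambda>t\<in>{..T}. K (g t) (eps t \<omega>)) \<in> A} \<partial>return Y gb)"
      using K_sep[of "return Y ga" "return Y gb", unfolded Y_def[symmetric]] rne
        prob_space_return[OF gaY] prob_space_return[OF gbY] by auto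
    define \<phi> where "\<phi> g = measure M {\<omega> \<in> space M. (\<lambda>t\<in>{..T}. K (g t) (eps t \<omega>)) \<in> A}" for g
    have Ane': "(\<integral>g. \<phi> g \<partial>return Y ga) \<noteq> (\<integral>g. \<phi> g \<partial>return Y gb)"
      using Ane unfolding \<phi>_def .
    have \<phi>m: "\<phi> \<in> borel_measurable Y"
    proof (rule ccontr)
      assume nm: "\<phi> \<notin> borel_measurable Y"
      have "\<not> integrable (return Y g) \<phi>" for g
      proof
        assume "integrable (return Y g) \<phi>"
        then have "\<phi> \<in> borel_measurable (return Y g)" by auto
        then show False using nm by (simp add: measurable_cong_sets[OF sets_return refl])
      qed
      then show False using Ane' by (simp add: not_integrable_integral_eq)
    qed
    have "\<phi> ga \<noteq> \<phi> gb"
      using Ane' integral_return[OF gaY \<phi>m] integral_return[OF gbY \<phi>m] by simp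
    moreover have "\<phi> (gamma f h T x) = measure (distr M Y (G x)) A" if "x \<in> Xs" for x
    proof -
      have "measure (distr M Y (G x)) A = measure M (G x -` A \<inter> space M)"
        by (rule measure_distr[OF Gmeas[OF that] A])
      also have "G x -` A \<inter> space M = {\<omega> \<in> space M. (\<lambda>t\<in>{..T}. K (gamma f h T x t) (eps t \<omega>)) \<in> A}"
        unfolding G_def by auto
      finally show ?thesis unfolding \<phi>_def by simp
    qed
    ultimately show "dist_distinguishable M Ys F H eta eps T xa xb"
      unfolding dist_distinguishable_def law[OF xa] law[OF xb] ga_def gb_def
      using xa xb by metis
  qed
qed

end
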